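(* Let $a,b,c,n_1,n_2,n_3,\ell$ be integers with $n_1a+n_2b+n_3c=0$ and $n_1^2+n_2^2+n_3^2=\ell^2$, and put $u'=(a,b,c)$, $n=(n_1,n_2,n_3)$. Then there exists $v=(a',b',c')\in\mathbb{Z}^3$ such that $\ell u'$ and $v$ define a lattice square in the plane with normal $n$; that is, $v\cdot n=0$, $v\cdot(\ell u')=0$ and $|v|=|\ell u'|$.
   Context: $\cdot$ and $|\cdot|$ denote the standard dot product and Euclidean norm in $\mathbb{R}^3$. *)

theory Defs
  imports "HOL-Analysis.Analysis"
begin

definition ivec3 :: "int \<Rightarrow> int \<Rightarrow> int \<Rightarrow> real^3" where
  "ivec3 x y z = vector [real_of_int x, real_of_int y, real_of_int z]"

end

theory Submission
  imports Defs
begin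

lemma ivec3_inner: "ivec3 x y z \<bullet> ivec3 p q r = real_of_int (x*p + y*q + z*r)"
  unfolding ivec3_def inner_vec_def
  by (simp add: sum_3 vector_3)

lemma ivec3_scale: "of_int l *\<^sub>R ivec3 x y z = ivec3 (l*x) (l*y) (l*z)"
  unfolding ivec3_def by (simp add: vec_eq_iff forall_3 vector_3)

theorem theorem2p3:
  fixes a b c n1 n2 n3 l :: int
  assumes "n1 * a + n2 * b + n3 * c = 0"
    and "n1^2 + n2^2 + n3^2 = l^2"
  shows "\<exists>a' b' c' :: int.
           ivec3 a' b' c' \<bullet> ivec3 n1 n2 n3 = 0 \<and>
           ivec3 a' b' c' \<bullet> (of_int l *\<^sub>R ivec3 a b c) = 0 \<and>
           norm (ivec3 a' b' c') = norm (of_int l *\<^sub>R ivec3 a b c)"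
proof (intro exI conjI)
  let ?a = "n2*c - n3*b" and ?b = "n3*a - n1*c" and ?c = "n1*b - n2*a"
  show "ivec3 ?a ?b ?c \<bullet> ivec3 n1 n2 n3 = 0"
    unfolding ivec3_inner by (simp add: algebra_simps)
  show "ivec3 ?a ?b ?c \<bullet> (of_int l *\<^sub>R ivec3 a b c) = 0"
    unfolding ivec3_scale ivec3_inner by (simp add: algebra_simps)
  have "?a*?a + ?b*?b + ?c*?c = (n1^2+n2^2+n3^2)*(a*a+b*b+c*c) - (n1 * a + n2 * b + n3 * c)^2"
    by (simp add: algebra_simps power2_eq_square)
  also have "\<dots> = (l*a)*(l*a) + (l*b)*(l*b) + (l*c)*(l*c)"
    using assms by (simp add: algebra_simps power2_eq_square)
  finally have e: "?a*?a + ?b*?b + ?c*?c = (l*a)*(l*a) + (l*b)*(l*b) + (l*c)*(l*c)" .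
  show "norm (ivec3 ?a ?b ?c) = norm (of_int l *\<^sub>R ivec3 a b c)"
    unfolding ivec3_scale norm_eq_sqrt_inner ivec3_inner using e by simp
qed

end
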